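(* Let $\psi:[0,\infty]\to[0,\infty]$ be a sense-reversing homeomorphism and $\varphi:[0,\infty]\to[0,\infty]$ a monotone function. Then $$[\psi\circ\varphi]^{-1}(\tau)=\varphi^{-1}\circ\psi^{-1}(\tau)\quad\forall\tau\in[0,\infty],$$ $$[\varphi\circ\psi]^{-1}(\tau)\le\psi^{-1}\circ\varphi^{-1}(\tau)\quad\forall\tau\in[0,\infty],$$ and, except for a countable collection of $\tau\in[0,\infty]$, $[\varphi\circ\psi]^{-1}(\tau)=\psi^{-1}\circ\varphi^{-1}(\tau)$. The last equality holds for all $\tau\in[0,\infty]$ if and only if $\varphi$ is strictly monotone.
   Context: Inverse functions of monotone functions are defined as follows: for a non-decreasing $\Phi:[0,\infty]\to[0,\infty]$, $\Phi^{-1}(\tau)=\inf\{t\in[0,\infty]:\Phi(t)\ge\tau\}$; for a non-increasing $\varphi:[0,\infty]\to[0,\infty]$, $\varphi^{-1}(\tau)=\inf\{t\in[0,\infty]:\varphi(t)\le\tau\}$; in both cases $\inf\emptyset=\infty$. *)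

theory Defs
  imports "HOL-Analysis.Analysis" "HOL-Library.Extended_Nonnegative_Real"
begin

text \<open>[0,\<infinity>] is modelled by the type ennreal; Inf of the empty set is top = \<infinity>.\<close>

definition inv_incr :: "(ennreal \<Rightarrow> ennreal) \<Rightarrow> ennreal \<Rightarrow> ennreal" where
  "inv_incr F \<tau> = Inf {t. F t \<ge> \<tau>}"

definition inv_decr :: "(ennreal \<Rightarrow> ennreal) \<Rightarrow> ennreal \<Rightarrow> ennreal" where
  "inv_decr f \<tau> = Inf {t. f t \<le> \<tau>}"

text \<open>Generalised inverse of a monotone function; the flag says whether the
  function is regarded as non-decreasing (True) or non-increasing (False).\<close>
definition mono_inv :: "bool \<Rightarrow> (ennreal \<Rightarrow> ennreal) \<Rightarrow> ennreal \<Rightarrow> ennreal" where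
  "mono_inv up f = (if up then inv_incr f else inv_decr f)"

definition sense_reversing_homeo :: "(ennreal \<Rightarrow> ennreal) \<Rightarrow> bool" where
  "sense_reversing_homeo \<psi> \<longleftrightarrow> (\<exists>g. homeomorphism UNIV UNIV \<psi> g) \<and> antimono \<psi>"

definition strictly_monotone :: "(ennreal \<Rightarrow> ennreal) \<Rightarrow> bool" where
  "strictly_monotone f \<longleftrightarrow> strict_mono f \<or> (\<forall>x y. x < y \<longrightarrow> f y < f x)"

end

theory Submission
  imports Defs
begin

lemma cov_le:
  fixes A B :: "ennreal set"
  assumes "\<And>x. x \<in> A \<or> x \<in> B"
  shows "Inf A \<le> Sup B"
proof (rule dense_le)
  fix x assume "x < Inf A"
  then have "x \<notin> A" using Inf_lower not_le by blast
  then have "x \<in> B" using assms by blast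
  then show "x \<le> Sup B" by (rule Sup_upper)
qed

lemma gen_rat:
  fixes A B :: "ennreal set"
  assumes "Inf A < Sup B"
  shows "\<exists>r::rat. \<exists>u\<in>A. \<exists>l\<in>B. u < ennreal (real_of_rat r) \<and> ennreal (real_of_rat r) < l"
proof -
  obtain r :: rat where r: "Inf A < ennreal (real_of_rat r)" "ennreal (real_of_rat r) < Sup B"
    using ennreal_rat_dense[OF assms] by blast
  from r(1) obtain u where "u \<in> A" "u < ennreal (real_of_rat r)" by (auto simp: Inf_less_iff)
  moreover from r(2) obtain l where "l \<in> B" "ennreal (real_of_rat r) < l" by (auto simp: less_Sup_iff)
  ultimately show ?thesis by blast
qed

lemma gen_pair:
  fixes A B :: "ennreal set"
  assumes "Inf A < Sup B"
  shows "\<exists>u\<in>A. \<exists>l\<in>B. u < l"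
  using gen_rat[OF assms] by (meson less_trans)

lemma srh_inv:
  assumes "sense_reversing_homeo \<psi>"
  obtains g where "\<And>x. g (\<psi> x) = x" "\<And>y. \<psi> (g y) = y" "antimono \<psi>"
  using assms unfolding sense_reversing_homeo_def homeomorphism_def by blast

context
  fixes \<psi> g :: "ennreal \<Rightarrow> ennreal"
  assumes gpsi: "\<And>x. g (\<psi> x) = x" and psig: "\<And>y. \<psi> (g y) = y" and am: "antimono \<psi>"
begin

lemma le_iff: "\<psi> s \<le> \<tau> \<longleftrightarrow> g \<tau> \<le> s"
proof
  assume h: "\<psi> s \<le> \<tau>"
  show "g \<tau> \<le> s"
  proof (rule ccontr)
    assume "\<not> g \<tau> \<le> s"
    then have "s < g \<tau>" by simp
    then have "\<psi> (g \<tau>) \<le> \<psi> s" using am by (simp add: antimono_def)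
    then have "\<psi> s = \<tau>" using h psig by (metis antisym)
    then have "s = g \<tau>" using gpsi by metis
    with \<open>s < g \<tau>\<close> show False by simp
  qed
next
  assume "g \<tau> \<le> s"
  then have "\<psi> s \<le> \<psi> (g \<tau>)" using am by (simp add: antimono_def)
  then show "\<psi> s \<le> \<tau>" using psig by simp
qed

lemma ge_iff: "\<tau> \<le> \<psi> s \<longleftrightarrow> s \<le> g \<tau>"
proof
  assume h: "\<tau> \<le> \<psi> s"
  show "s \<le> g \<tau>"
  proof (rule ccontr)
    assume "\<not> s \<le> g \<tau>"
    then have "g \<tau> < s" by simp
    then have "\<psi> s \<le> \<psi> (g \<tau>)" using am by (simp add: antimono_def)
    then have "\<psi> s = \<tau>" using h psig by (metis antisym)
    then have "s = g \<tau>" using gpsi by metis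
    with \<open>g \<tau> < s\<close> show False by simp
  qed
next
  assume "s \<le> g \<tau>"
  then have "\<psi> (g \<tau>) \<le> \<psi> s" using am by (simp add: antimono_def)
  then show "\<tau> \<le> \<psi> s" using psig by simp
qed

lemma g_inj: "g a = g b \<Longrightarrow> a = b"
  using psig by metis

lemma g_anti: "a \<le> b \<Longrightarrow> g b \<le> g a"
  using ge_iff le_iff psig by (metis order.refl)

lemma Inf_pre: "Inf {t. \<psi> t \<in> S} = g (Sup S)"
proof (rule antisym)
  show "g (Sup S) \<le> Inf {t. \<psi> t \<in> S}"
  proof (rule Inf_greatest)
    fix t assume "t \<in> {t. \<psi> t \<in> S}"
    then have "\<psi> t \<le> Sup S" by (simp add: Sup_upper)
    then show "g (Sup S) \<le> t" using le_iff by blast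
  qed
next
  have "Sup S \<le> \<psi> (Inf {t. \<psi> t \<in> S})"
  proof (rule Sup_least)
    fix l assume "l \<in> S"
    then have "g l \<in> {t. \<psi> t \<in> S}" using psig by simp
    then have "Inf {t. \<psi> t \<in> S} \<le> g l" by (rule Inf_lower)
    then show "l \<le> \<psi> (Inf {t. \<psi> t \<in> S})" using ge_iff by blast
  qed
  then show "Inf {t. \<psi> t \<in> S} \<le> g (Sup S)" using ge_iff by blast
qed

lemma inv_decr_psi: "inv_decr \<psi> \<tau> = g \<tau>"
proof -
  have "{t. \<psi> t \<le> \<tau>} = {g \<tau>..}" using le_iff by auto
  then show ?thesis by (simp add: inv_decr_def)
qed

end

lemma Inf_ge_simp[simp]: "Inf (Collect ((\<le>) (a::ennreal))) = a"
  by (metis Inf_atLeast atLeast_def)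

lemma countable_rat_img: "countable ((\<lambda>r::rat. ennreal (real_of_rat r)) ` UNIV)"
  by simp

theorem lemma2p5:
  fixes \<psi> \<phi> :: "ennreal \<Rightarrow> ennreal" and up :: bool
  assumes "sense_reversing_homeo \<psi>"
    and "if up then mono \<phi> else antimono \<phi>"
  shows "(\<forall>\<tau>. mono_inv (\<not> up) (\<psi> \<circ> \<phi>) \<tau> = mono_inv up \<phi> (mono_inv False \<psi> \<tau>))
       \<and> (\<forall>\<tau>. mono_inv (\<not> up) (\<phi> \<circ> \<psi>) \<tau> \<le> mono_inv False \<psi> (mono_inv up \<phi> \<tau>))
       \<and> countable {\<tau>. mono_inv (\<not> up) (\<phi> \<circ> \<psi>) \<tau> \<noteq> mono_inv False \<psi> (mono_inv up \<phi> \<tau>)}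
       \<and> ((\<forall>\<tau>. mono_inv (\<not> up) (\<phi> \<circ> \<psi>) \<tau> = mono_inv False \<psi> (mono_inv up \<phi> \<tau>))
            \<longleftrightarrow> strictly_monotone \<phi>)"
proof -
  obtain g where gpsi: "\<And>x. g (\<psi> x) = x" and psig: "\<And>y. \<psi> (g y) = y" and am: "antimono \<psi>"
    using srh_inv[OF assms(1)] by blast
  note li = le_iff[OF gpsi psig am] and gi = ge_iff[OF gpsi psig am]
    and ginj = g_inj[OF gpsi psig am] and ganti = g_anti[OF gpsi psig am]
    and IP = Inf_pre[OF gpsi psig am] and idp = inv_decr_psi[OF gpsi psig am]
  define Q where "Q = (\<lambda>r::rat. ennreal (real_of_rat r)) ` UNIV"
  have cQ: "countable Q" unfolding Q_def by simp
  define L where "L \<tau> = {s. \<phi> s \<le> \<tau>}" for \<tau>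
  define U where "U \<tau> = {s. \<tau> \<le> \<phi> s}" for \<tau>
  have cov1: "\<And>\<tau> x. x \<in> U \<tau> \<or> x \<in> L \<tau>" and cov2: "\<And>\<tau> x. x \<in> L \<tau> \<or> x \<in> U \<tau>"
    unfolding L_def U_def by (auto simp: linear)
  show ?thesis
  proof (cases up)
    case True
    then have mo: "mono \<phi>" using assms(2) by simp
    have P1: "mono_inv (\<not> up) (\<psi> \<circ> \<phi>) \<tau> = mono_inv up \<phi> (mono_inv False \<psi> \<tau>)" for \<tau>
      using True by (simp add: mono_inv_def idp inv_decr_def inv_incr_def li)
    have LHS: "mono_inv (\<not> up) (\<phi> \<circ> \<psi>) \<tau> = g (Sup (L \<tau>))" for \<tau>
    proof -
      have "{t. (\<phi> \<circ> \<psi>) t \<le> \<tau>} = {t. \<psi> t \<in> L \<tau>}" by (auto simp: L_def)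
      then show ?thesis using True IP by (simp add: mono_inv_def inv_decr_def)
    qed
    have RHS: "mono_inv False \<psi> (mono_inv up \<phi> \<tau>) = g (Inf (U \<tau>))" for \<tau>
      using True by (simp add: mono_inv_def idp inv_incr_def U_def)
    have P2: "g (Sup (L \<tau>)) \<le> g (Inf (U \<tau>))" for \<tau>
      using ganti cov_le[OF cov1] by blast
    have bad: "{\<tau>. mono_inv (\<not> up) (\<phi> \<circ> \<psi>) \<tau> \<noteq> mono_inv False \<psi> (mono_inv up \<phi> \<tau>)}
        \<subseteq> \<phi> ` Q"
    proof
      fix \<tau> assume "\<tau> \<in> {\<tau>. mono_inv (\<not> up) (\<phi> \<circ> \<psi>) \<tau> \<noteq> mono_inv False \<psi> (mono_inv up \<phi> \<tau>)}"
      then have "Sup (L \<tau>) \<noteq> Inf (U \<tau>)" by (auto simp: LHS RHS)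
      then have "Inf (U \<tau>) < Sup (L \<tau>)" using cov_le[OF cov1] by (simp add: order.strict_iff_order)
      then obtain r u l where u: "u \<in> U \<tau>" "u < ennreal (real_of_rat r)"
        and l: "l \<in> L \<tau>" "ennreal (real_of_rat r) < l"
        using gen_rat by blast
      have "\<tau> \<le> \<phi> (ennreal (real_of_rat r))" using u mo
        by (auto simp: U_def mono_def intro: order_trans less_imp_le)
      moreover have "\<phi> (ennreal (real_of_rat r)) \<le> \<tau>" using l mo
        by (auto simp: L_def mono_def intro: order_trans less_imp_le)
      ultimately show "\<tau> \<in> \<phi> ` Q" unfolding Q_def by (metis antisym rangeI image_eqI)
    qed
    have P3: "countable {\<tau>. mono_inv (\<not> up) (\<phi> \<circ> \<psi>) \<tau> \<noteq> mono_inv False \<psi> (mono_inv up \<phi> \<tau>)}"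
      using countable_subset[OF bad] cQ by blast
    have sm: "strictly_monotone \<phi> \<longleftrightarrow> strict_mono \<phi>"
    proof -
      have "\<not> (\<forall>x y. x < y \<longrightarrow> \<phi> y < \<phi> x)"
      proof
        assume h: "\<forall>x y. x < y \<longrightarrow> \<phi> y < \<phi> x"
        have "(0::ennreal) < 1" by simp
        then have "\<phi> 1 < \<phi> 0" using h by blast
        moreover have "\<phi> 0 \<le> \<phi> 1" using mo by (simp add: mono_def)
        ultimately show False by simp
      qed
      then show ?thesis unfolding strictly_monotone_def by blast
    qed
    have P4: "(\<forall>\<tau>. mono_inv (\<not> up) (\<phi> \<circ> \<psi>) \<tau> = mono_inv False \<psi> (mono_inv up \<phi> \<tau>))
            \<longleftrightarrow> strictly_monotone \<phi>"
    proof
      assume eq: "\<forall>\<tau>. mono_inv (\<not> up) (\<phi> \<circ> \<psi>) \<tau> = mono_inv False \<psi> (mono_inv up \<phi> \<tau>)"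
      show "strictly_monotone \<phi>" unfolding sm strict_mono_def
      proof (intro allI impI, rule ccontr)
        fix a b :: ennreal assume ab: "a < b" "\<not> \<phi> a < \<phi> b"
        then have e: "\<phi> a = \<phi> b" using mo by (simp add: mono_def less_le_not_le)
        have "a \<in> U (\<phi> a)" "b \<in> L (\<phi> a)" using e by (auto simp: U_def L_def)
        then have "Inf (U (\<phi> a)) < Sup (L (\<phi> a))"
          by (meson Inf_lower Sup_upper ab(1) order.strict_trans1 order.strict_trans2)
        moreover have "Sup (L (\<phi> a)) = Inf (U (\<phi> a))" using eq ginj by (metis LHS RHS)
        ultimately show False by simp
      qed
    next
      assume "strictly_monotone \<phi>"
      then have st: "strict_mono \<phi>" using sm by simp
      show "\<forall>\<tau>. mono_inv (\<not> up) (\<phi> \<circ> \<psi>) \<tau> = mono_inv False \<psi> (mono_inv up \<phi> \<tau>)"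
      proof
        fix \<tau>
        have "\<not> Inf (U \<tau>) < Sup (L \<tau>)"
        proof
          assume "Inf (U \<tau>) < Sup (L \<tau>)"
          then obtain u l where "u \<in> U \<tau>" "l \<in> L \<tau>" "u < l" using gen_pair by blast
          then show False using st by (auto simp: U_def L_def strict_mono_def)
              (metis leD order_trans)
        qed
        then have "Sup (L \<tau>) = Inf (U \<tau>)" using cov_le[OF cov1] by (meson antisym not_le)
        then show "mono_inv (\<not> up) (\<phi> \<circ> \<psi>) \<tau> = mono_inv False \<psi> (mono_inv up \<phi> \<tau>)"
          by (simp add: LHS RHS)
      qed
    qed
    show ?thesis using P1 P2 P3 P4 LHS RHS by auto
  next
    case False
    then have mo: "antimono \<phi>" using assms(2) by simp
    have P1: "mono_inv (\<not> up) (\<psi> \<circ> \<phi>) \<tau> = mono_inv up \<phi> (mono_inv False \<psi> \<tau>)" for \<tau>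
      using False by (simp add: mono_inv_def idp) (simp add: inv_decr_def inv_incr_def gi)
    have LHS: "mono_inv (\<not> up) (\<phi> \<circ> \<psi>) \<tau> = g (Sup (U \<tau>))" for \<tau>
    proof -
      have "{t. \<tau> \<le> (\<phi> \<circ> \<psi>) t} = {t. \<psi> t \<in> U \<tau>}" by (auto simp: U_def)
      then show ?thesis using False IP by (simp add: mono_inv_def inv_incr_def)
    qed
    have RHS: "mono_inv False \<psi> (mono_inv up \<phi> \<tau>) = g (Inf (L \<tau>))" for \<tau>
      using False by (simp add: mono_inv_def idp) (simp add: inv_decr_def L_def)
    have P2: "g (Sup (U \<tau>)) \<le> g (Inf (L \<tau>))" for \<tau>
      using ganti cov_le[OF cov2] by blast
    have bad: "{\<tau>. mono_inv (\<not> up) (\<phi> \<circ> \<psi>) \<tau> \<noteq> mono_inv False \<psi> (mono_inv up \<phi> \<tau>)}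
        \<subseteq> \<phi> ` Q"
    proof
      fix \<tau> assume "\<tau> \<in> {\<tau>. mono_inv (\<not> up) (\<phi> \<circ> \<psi>) \<tau> \<noteq> mono_inv False \<psi> (mono_inv up \<phi> \<tau>)}"
      then have "Sup (U \<tau>) \<noteq> Inf (L \<tau>)" by (auto simp: LHS RHS)
      then have "Inf (L \<tau>) < Sup (U \<tau>)" using cov_le[OF cov2] by (simp add: order.strict_iff_order)
      then obtain r u l where u: "u \<in> L \<tau>" "u < ennreal (real_of_rat r)"
        and l: "l \<in> U \<tau>" "ennreal (real_of_rat r) < l"
        using gen_rat by blast
      have "\<phi> (ennreal (real_of_rat r)) \<le> \<tau>" using u mo
        by (auto simp: L_def antimono_def intro: order_trans less_imp_le)
      moreover have "\<tau> \<le> \<phi> (ennreal (real_of_rat r))" using l mo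
        by (auto simp: U_def antimono_def intro: order_trans less_imp_le)
      ultimately show "\<tau> \<in> \<phi> ` Q" unfolding Q_def by (metis antisym rangeI image_eqI)
    qed
    have P3: "countable {\<tau>. mono_inv (\<not> up) (\<phi> \<circ> \<psi>) \<tau> \<noteq> mono_inv False \<psi> (mono_inv up \<phi> \<tau>)}"
      using countable_subset[OF bad] cQ by blast
    have sm: "strictly_monotone \<phi> \<longleftrightarrow> (\<forall>x y. x < y \<longrightarrow> \<phi> y < \<phi> x)"
    proof -
      have "\<not> strict_mono \<phi>"
      proof
        assume h: "strict_mono \<phi>"
        have "(0::ennreal) < 1" by simp
        then have "\<phi> 0 < \<phi> 1" using h by (simp add: strict_mono_def)
        moreover have "\<phi> 1 \<le> \<phi> 0" using mo by (simp add: antimono_def)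
        ultimately show False by simp
      qed
      then show ?thesis unfolding strictly_monotone_def by blast
    qed
    have P4: "(\<forall>\<tau>. mono_inv (\<not> up) (\<phi> \<circ> \<psi>) \<tau> = mono_inv False \<psi> (mono_inv up \<phi> \<tau>))
            \<longleftrightarrow> strictly_monotone \<phi>"
    proof
      assume eq: "\<forall>\<tau>. mono_inv (\<not> up) (\<phi> \<circ> \<psi>) \<tau> = mono_inv False \<psi> (mono_inv up \<phi> \<tau>)"
      show "strictly_monotone \<phi>" unfolding sm
      proof (intro allI impI, rule ccontr)
        fix a b :: ennreal assume ab: "a < b" "\<not> \<phi> b < \<phi> a"
        then have e: "\<phi> a = \<phi> b" using mo by (simp add: antimono_def less_le_not_le)
        have "a \<in> L (\<phi> a)" "b \<in> U (\<phi> a)" using e by (auto simp: U_def L_def)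
        then have "Inf (L (\<phi> a)) < Sup (U (\<phi> a))"
          by (meson Inf_lower Sup_upper ab(1) order.strict_trans1 order.strict_trans2)
        moreover have "Sup (U (\<phi> a)) = Inf (L (\<phi> a))" using eq ginj by (metis LHS RHS)
        ultimately show False by simp
      qed
    next
      assume "strictly_monotone \<phi>"
      then have st: "\<forall>x y. x < y \<longrightarrow> \<phi> y < \<phi> x" using sm by simp
      show "\<forall>\<tau>. mono_inv (\<not> up) (\<phi> \<circ> \<psi>) \<tau> = mono_inv False \<psi> (mono_inv up \<phi> \<tau>)"
      proof
        fix \<tau>
        have "\<not> Inf (L \<tau>) < Sup (U \<tau>)"
        proof
          assume "Inf (L \<tau>) < Sup (U \<tau>)"
          then obtain u l where "u \<in> L \<tau>" "l \<in> U \<tau>" "u < l" using gen_pair by blast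
          then show False using st by (auto simp: U_def L_def)
              (metis leD order_trans)
        qed
        then have "Sup (U \<tau>) = Inf (L \<tau>)" using cov_le[OF cov2] by (meson antisym not_le)
        then show "mono_inv (\<not> up) (\<phi> \<circ> \<psi>) \<tau> = mono_inv False \<psi> (mono_inv up \<phi> \<tau>)"
          by (simp add: LHS RHS)
      qed
    qed
    show ?thesis using P1 P2 P3 P4 LHS RHS by auto
  qed
qed

end
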